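(* Let $p\in[1,\infty]$ and $d\in\mathbb N$. For $n\in\mathbb N$ let $s_n\in\mathbb N$ and let $\mathbf w^{(n)}=(\mathbf w^{(n)}_0,\dots,\mathbf w^{(n)}_{s_n})\in\mathbb R^{s_n+1}$ be filter masks, let $m_0:=d$, $m_n:=m_{n-1}+s_n$, and let $\mathbf b_n\in\mathbb R^{m_n}$ be bias vectors. Suppose $\sum_{n=1}^\infty\|\mathbf b_n\|_p<\infty$, $\mathbf w^{(n)}_0=1$ for all $n\in\mathbb N$, and $\sum_{n=1}^\infty\sum_{j=1}^{s_n}|\mathbf w^{(n)}_j|<\infty$. Then the deep ReLU convolutional neural networks $x^{(n)}$ converge pointwise on $[0,1]^d$, i.e. for each $x\in[0,1]^d$ the sequence $\tilde x^{(n)}$ converges in $\ell^p$.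
   Context: $\sigma(t)=\max(t,0)$ applied componentwise. For $\mathbf x\in\mathbb R^m$ and $\mathbf w=(\mathbf w_0,\dots,\mathbf w_s)$, the convolution $\mathbf x*\mathbf w\in\mathbb R^{m+s}$ has entries $(\mathbf x*\mathbf w)_i=\sum_{j=\max(0,i-m)}^{\min(i-1,s)}\mathbf w_j\mathbf x_{i-j}$, $1\le i\le m+s$; equivalently $\mathbf x*\mathbf w=\mathbf W\mathbf x$ with $\mathbf W\in\mathbb R^{(m+s)\times m}$, $\mathbf W_{jk}=\mathbf w_{j-k}$ if $0\le j-k\le s$ and $0$ otherwise. The CNN is defined by $x^{(0)}:=x\in[0,1]^d$ and $x^{(n)}:=\sigma(x^{(n-1)}*\mathbf w^{(n)}+\mathbf b_n)\in\mathbb R^{m_n}$; $\tilde x^{(n)}\in\ell^p$ denotes $x^{(n)}$ extended by zeros beyond its first $m_n$ entries. *)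

theory Defs
  imports "HOL-Analysis.Analysis"
begin

text \<open>Vectors in R^m are represented 0-based as functions nat => real; only the
entries with index < m are meaningful (entry i here is entry i+1 of the paper).\<close>

definition relu :: "real \<Rightarrow> real" where
  "relu t = max t 0"

definition conv :: "nat \<Rightarrow> nat \<Rightarrow> (nat \<Rightarrow> real) \<Rightarrow> (nat \<Rightarrow> real) \<Rightarrow> nat \<Rightarrow> real" where
  "conv m s w x i = (\<Sum>j\<le>s. if j \<le> i \<and> i - j < m then w j * x (i - j) else 0)"

fun width :: "nat \<Rightarrow> (nat \<Rightarrow> nat) \<Rightarrow> nat \<Rightarrow> nat" where
  "width d s 0 = d"
| "width d s (Suc n) = width d s n + s (Suc n)"

definition zext :: "nat \<Rightarrow> (nat \<Rightarrow> real) \<Rightarrow> nat \<Rightarrow> real" where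
  "zext m v i = (if i < m then v i else 0)"

text \<open>The CNN layers x^(n), already extended by zeros (i.e. the sequences tilde x^(n)).\<close>
fun cnn :: "nat \<Rightarrow> (nat \<Rightarrow> nat) \<Rightarrow> (nat \<Rightarrow> nat \<Rightarrow> real) \<Rightarrow> (nat \<Rightarrow> nat \<Rightarrow> real)
             \<Rightarrow> (nat \<Rightarrow> real) \<Rightarrow> nat \<Rightarrow> nat \<Rightarrow> real" where
  "cnn d s w b x 0 = zext d x"
| "cnn d s w b x (Suc n) = zext (width d s (Suc n))
     (\<lambda>i. relu (conv (width d s n) (s (Suc n)) (w (Suc n)) (cnn d s w b x n) i + b (Suc n) i))"

definition lp_norm :: "ereal \<Rightarrow> (nat \<Rightarrow> real) \<Rightarrow> real" where
  "lp_norm p f = (if p = \<infinity> then (SUP i. \<bar>f i\<bar>)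
                  else (\<Sum>i. \<bar>f i\<bar> powr real_of_ereal p) powr (1 / real_of_ereal p))"

definition in_lp :: "ereal \<Rightarrow> (nat \<Rightarrow> real) \<Rightarrow> bool" where
  "in_lp p f = (if p = \<infinity> then bounded (range f)
                else summable (\<lambda>i. \<bar>f i\<bar> powr real_of_ereal p))"

end

theory Submission
  imports Defs
begin


lemma powr_convex_ineq:
  fixes x y t r :: real
  assumes "0 \<le> x" "0 \<le> y" "0 \<le> t" "t \<le> 1" "1 \<le> r"
  shows "((1-t)*x + t*y) powr r \<le> (1-t) * x powr r + t * y powr r"
proof (cases "x = 0 \<or> y = 0")
  case False
  then have "x > 0" "y > 0" using assms by auto
  then show ?thesis using convex_onD[OF powr_convex[OF assms(5)], of t x y] assms by simp
next
  case True
  have A: "c powr r \<le> c" if "0 \<le> c" "c \<le> 1" for c :: real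
    using that assms(5) powr_le_one_le[of c r] by (cases "c = 0") auto
  show ?thesis
  proof (cases "x = 0")
    case True
    then have "((1-t)*x + t*y) powr r = t powr r * y powr r" using assms by (simp add: powr_mult)
    also have "\<dots> \<le> t * y powr r" using A[of t] assms by (intro mult_right_mono) auto
    finally show ?thesis using True assms by simp
  next
    case False
    then have "y = 0" using True by auto
    then have "((1-t)*x + t*y) powr r = (1-t) powr r * x powr r" using assms by (simp add: powr_mult)
    also have "\<dots> \<le> (1-t) * x powr r" using A[of "1-t"] assms by (intro mult_right_mono) auto
    finally show ?thesis using \<open>y = 0\<close> assms by simp
  qed
qed

lemma sum_zero_powr:
  fixes r :: real
  assumes "finite A" "(\<Sum>i\<in>A. \<bar>f i\<bar> powr r) powr (1/r) = 0"
  shows "\<forall>i\<in>A. f i = 0"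
proof -
  have "(\<Sum>i\<in>A. \<bar>f i\<bar> powr r) = 0" using assms(2) by simp
  then have "\<forall>i\<in>A. \<bar>f i\<bar> powr r = 0" using assms(1) by (subst (asm) sum_nonneg_eq_0_iff) auto
  then show ?thesis by simp
qed

lemma minkowski_fin:
  fixes r :: real
  assumes r: "1 \<le> r" and fin: "finite A"
  shows "(\<Sum>i\<in>A. \<bar>f i + g i\<bar> powr r) powr (1/r) \<le> (\<Sum>i\<in>A. \<bar>f i\<bar> powr r) powr (1/r) + (\<Sum>i\<in>A. \<bar>g i\<bar> powr r) powr (1/r)"
proof -
  define a where "a = (\<Sum>i\<in>A. \<bar>f i\<bar> powr r) powr (1/r)"
  define b where "b = (\<Sum>i\<in>A. \<bar>g i\<bar> powr r) powr (1/r)"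
  show ?thesis
  proof (cases "a = 0 \<or> b = 0")
    case True
    then show ?thesis
    proof
      assume "a = 0"
      then have "\<forall>i\<in>A. f i = 0" using sum_zero_powr[OF fin, of f r] unfolding a_def by blast
      then have "(\<Sum>i\<in>A. \<bar>f i + g i\<bar> powr r) = (\<Sum>i\<in>A. \<bar>g i\<bar> powr r)" by (intro sum.cong) auto
      then show ?thesis using \<open>a = 0\<close> unfolding a_def b_def by simp
    next
      assume "b = 0"
      then have "\<forall>i\<in>A. g i = 0" using sum_zero_powr[OF fin, of g r] unfolding b_def by blast
      then have "(\<Sum>i\<in>A. \<bar>f i + g i\<bar> powr r) = (\<Sum>i\<in>A. \<bar>f i\<bar> powr r)" by (intro sum.cong) auto
      then show ?thesis using \<open>b = 0\<close> unfolding a_def b_def by simp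
    qed
  next
    case False
    have "a \<ge> 0" "b \<ge> 0" unfolding a_def b_def by simp_all
    then have a0: "a > 0" "b > 0" using False by auto
    have Sa: "(\<Sum>i\<in>A. \<bar>f i\<bar> powr r) = a powr r" unfolding a_def using r
      by (simp add: powr_powr sum_nonneg)
    have Sb: "(\<Sum>i\<in>A. \<bar>g i\<bar> powr r) = b powr r" unfolding b_def using r
      by (simp add: powr_powr sum_nonneg)
    define t where "t = b / (a+b)"
    have t: "0 \<le> t" "t \<le> 1" "1 - t = a/(a+b)" using a0 by (auto simp: t_def field_simps)
    define c where "c = (a+b) powr r"
    have pt: "\<bar>f i + g i\<bar> powr r \<le> (c*(1-t)/a powr r) * \<bar>f i\<bar> powr r + (c*t/b powr r) * \<bar>g i\<bar> powr r" for i
    proof -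
      have e: "\<bar>f i\<bar> + \<bar>g i\<bar> = (a+b) * ((1-t) * (\<bar>f i\<bar>/a) + t * (\<bar>g i\<bar>/b))"
        unfolding t(3) t_def using a0 by (simp add: divide_simps)
      have "\<bar>f i + g i\<bar> powr r \<le> (\<bar>f i\<bar> + \<bar>g i\<bar>) powr r" using r by (intro powr_mono2) auto
      also have "\<dots> = (a+b) powr r * ((1-t) * (\<bar>f i\<bar>/a) + t * (\<bar>g i\<bar>/b)) powr r"
        unfolding e using a0 t by (subst powr_mult) auto
      also have "\<dots> \<le> (a+b) powr r * ((1-t) * (\<bar>f i\<bar>/a) powr r + t * (\<bar>g i\<bar>/b) powr r)"
        using a0 t r by (intro mult_left_mono powr_convex_ineq) auto
      also have "\<dots> = (c*(1-t)/a powr r) * \<bar>f i\<bar> powr r + (c*t/b powr r) * \<bar>g i\<bar> powr r"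
        unfolding c_def using a0 by (simp add: powr_divide distrib_left)
      finally show ?thesis .
    qed
    have "(\<Sum>i\<in>A. \<bar>f i + g i\<bar> powr r) \<le> (\<Sum>i\<in>A. (c*(1-t)/a powr r) * \<bar>f i\<bar> powr r + (c*t/b powr r) * \<bar>g i\<bar> powr r)"
      by (intro sum_mono pt)
    also have "\<dots> = (c*(1-t)/a powr r) * (\<Sum>i\<in>A. \<bar>f i\<bar> powr r) + (c*t/b powr r) * (\<Sum>i\<in>A. \<bar>g i\<bar> powr r)"
      by (simp add: sum.distrib sum_distrib_left)
    also have "\<dots> = c" 
    proof -
      have nz: "a powr r \<noteq> 0" "b powr r \<noteq> 0" using a0 by auto
      have "c*(1-t)/a powr r * a powr r = c*(1-t)" "c*t/b powr r * b powr r = c*t" using nz by simp_all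
      then show ?thesis unfolding Sa Sb by (simp add: algebra_simps)
    qed
    also have "\<dots> = (a+b) powr r" by (simp add: c_def)
    finally have "(\<Sum>i\<in>A. \<bar>f i + g i\<bar> powr r) powr (1/r) \<le> ((a+b) powr r) powr (1/r)"
      using r by (intro powr_mono2) (auto intro: sum_nonneg)
    also have "\<dots> = a + b" using a0 r by (simp add: powr_powr)
    finally show ?thesis by (simp add: a_def b_def)
  qed
qed



definition qn :: "ereal \<Rightarrow> nat \<Rightarrow> (nat \<Rightarrow> real) \<Rightarrow> real" where
  "qn p N f = (if p = \<infinity> then Max (insert 0 ((\<lambda>i. \<bar>f i\<bar>) ` {..<N}))
     else (\<Sum>i<N. \<bar>f i\<bar> powr real_of_ereal p) powr (1 / real_of_ereal p))"

lemma rp: "1 \<le> p \<Longrightarrow> p \<noteq> \<infinity> \<Longrightarrow> 1 \<le> real_of_ereal p"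
  by (cases p) auto

lemma qn_inf: "qn \<infinity> N f = Max (insert 0 ((\<lambda>i. \<bar>f i\<bar>) ` {..<N}))"
  by (simp add: qn_def)

lemma qn_fin: "p \<noteq> \<infinity> \<Longrightarrow> qn p N f = (\<Sum>i<N. \<bar>f i\<bar> powr real_of_ereal p) powr (1 / real_of_ereal p)"
  by (simp add: qn_def)

lemma qn_inf_le:
  assumes "p = \<infinity>" "0 \<le> B" "\<And>i. i < N \<Longrightarrow> \<bar>f i\<bar> \<le> B" shows "qn p N f \<le> B"
  unfolding assms(1) qn_inf using assms(2,3) by (subst Max_le_iff) auto

lemma qn_nonneg: "0 \<le> qn p N f"
  by (cases "p = \<infinity>") (auto simp: qn_def)

lemma qn_triangle:
  assumes "1 \<le> p" shows "qn p N (\<lambda>i. f i + g i) \<le> qn p N f + qn p N g"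
proof (cases "p = \<infinity>")
  case True
  have "\<bar>f i + g i\<bar> \<le> qn p N f + qn p N g" if "i < N" for i
  proof -
    have "\<bar>f i\<bar> \<le> qn p N f" "\<bar>g i\<bar> \<le> qn p N g" using that True by (auto simp: qn_def)
    then show ?thesis by linarith
  qed
  then show ?thesis using True qn_nonneg[of p N f] qn_nonneg[of p N g]
    by (intro qn_inf_le[OF True]) auto
next
  case False
  then show ?thesis using minkowski_fin[OF rp[OF assms False], of "{..<N}" f g] by (simp add: qn_fin)
qed

lemma qn_dom:
  assumes "1 \<le> p" "\<And>i. i < N \<Longrightarrow> \<bar>f i\<bar> \<le> \<bar>g i\<bar>" shows "qn p N f \<le> qn p N g"
proof (cases "p = \<infinity>")
  case True
  have "\<bar>f i\<bar> \<le> qn p N g" if "i < N" for i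
    using assms(2)[OF that] that True by (auto simp: qn_def intro: order_trans)
  then show ?thesis using True qn_nonneg[of p N g] by (intro qn_inf_le[OF True]) auto
next
  case False
  show ?thesis unfolding qn_fin[OF False] using rp[OF assms(1) False]
    by (intro powr_mono2 sum_mono) (auto intro: sum_nonneg assms(2))
qed

lemma qn_scale:
  assumes "1 \<le> p" shows "qn p N (\<lambda>i. c * f i) \<le> \<bar>c\<bar> * qn p N f"
proof (cases "p = \<infinity>")
  case True
  have "\<bar>c * f i\<bar> \<le> \<bar>c\<bar> * qn p N f" if "i < N" for i
  proof -
    have "\<bar>f i\<bar> \<le> qn p N f" using that True by (auto simp: qn_def)
    then show ?thesis by (simp add: abs_mult mult_left_mono)
  qed
  then show ?thesis using True qn_nonneg[of p N f] by (intro qn_inf_le[OF True]) auto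
next
  case False
  let ?r = "real_of_ereal p"
  have r: "1 \<le> ?r" using rp[OF assms False] .
  have "(\<Sum>i<N. \<bar>c * f i\<bar> powr ?r) = \<bar>c\<bar> powr ?r * (\<Sum>i<N. \<bar>f i\<bar> powr ?r)"
    by (simp add: abs_mult powr_mult sum_distrib_left)
  then have "qn p N (\<lambda>i. c * f i) = (\<bar>c\<bar> powr ?r) powr (1/?r) * qn p N f"
    by (simp add: qn_fin[OF False] powr_mult sum_nonneg)
  also have "\<dots> = \<bar>c\<bar> * qn p N f" using r by (simp add: powr_powr)
  finally show ?thesis by simp
qed

lemma qn_mono:
  assumes "1 \<le> p" "N \<le> M" shows "qn p N f \<le> qn p M f"
proof (cases "p = \<infinity>")
  case True
  show ?thesis unfolding qn_inf True using assms by (intro Max_mono) auto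
next
  case False
  show ?thesis unfolding qn_fin[OF False] using assms rp[OF assms(1) False]
    by (intro powr_mono2 sum_mono2) (auto intro: sum_nonneg)
qed

lemma qn_ge:
  assumes "1 \<le> p" "i < N" shows "\<bar>f i\<bar> \<le> qn p N f"
proof (cases "p = \<infinity>")
  case True
  then show ?thesis using assms by (simp add: qn_def)
next
  case False
  let ?r = "real_of_ereal p"
  have r: "1 \<le> ?r" using rp[OF assms(1) False] .
  have "\<bar>f i\<bar> = (\<bar>f i\<bar> powr ?r) powr (1/?r)" using r by (simp add: powr_powr)
  also have "\<dots> \<le> qn p N f" unfolding qn_fin[OF False] using assms r
    by (intro powr_mono2 member_le_sum) auto
  finally show ?thesis .
qed

lemma qn_zero: "qn p N (\<lambda>_. 0) = 0"
proof (cases "p = \<infinity>")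
  case True
  show ?thesis using qn_inf_le[OF True, of 0 N "\<lambda>_. 0"] qn_nonneg[of p N "\<lambda>_. 0"] by simp
qed (simp add: qn_fin)

lemma sum_shift_eq:
  fixes N j :: nat
  shows   "(\<Sum>i<N. (if j \<le> i then h (i - j) else 0)) = (\<Sum>k<N - j. (h k :: real))"
proof (induction N)
  case (Suc N)
  then show ?case
  proof (cases "j \<le> N")
    case True
    then have "Suc N - j = Suc (N - j)" by auto
    then show ?thesis using Suc True by simp
  next
    case False
    then have "Suc N - j = 0" "N - j = 0" by auto
    then show ?thesis using Suc False by simp
  qed
qed simp

lemma qn_shift:
  assumes "1 \<le> p" shows "qn p N (\<lambda>i. if j \<le> i then f (i - j) else 0) \<le> qn p N f"
proof (cases "p = \<infinity>")
  case True
  have "\<bar>if j \<le> i then f (i - j) else 0\<bar> \<le> qn p N f" if "i < N" for i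
    using qn_nonneg[of p N f] qn_ge[OF assms, of "i - j" N f] that by auto
  then show ?thesis using True qn_nonneg[of p N f] by (intro qn_inf_le[OF True]) auto
next
  case False
  let ?r = "real_of_ereal p"
  have r: "1 \<le> ?r" using rp[OF assms(1) False] .
  have "(\<Sum>i<N. \<bar>if j \<le> i then f (i - j) else 0\<bar> powr ?r) = (\<Sum>i<N. (if j \<le> i then \<bar>f (i - j)\<bar> powr ?r else 0))"
    by (intro sum.cong) auto
  also have "\<dots> = (\<Sum>k<N-j. \<bar>f k\<bar> powr ?r)" by (rule sum_shift_eq)
  also have "\<dots> \<le> (\<Sum>k<N. \<bar>f k\<bar> powr ?r)" by (intro sum_mono2) auto
  finally show ?thesis unfolding qn_fin[OF False] using r
    by (intro powr_mono2) (auto intro: sum_nonneg)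
qed

lemma qn_supp:
  assumes "1 \<le> p" "\<And>i. i \<ge> M \<Longrightarrow> f i = 0" shows "qn p N f \<le> qn p M f"
proof (cases "N \<le> M")
  case True then show ?thesis by (rule qn_mono[OF assms(1)])
next
  case NM: False
  show ?thesis
  proof (cases "p = \<infinity>")
    case True
    have "\<bar>f i\<bar> \<le> qn p M f" if "i < N" for i
      using qn_nonneg[of p M f] qn_ge[OF assms(1), of i M f] assms(2)[of i] by (cases "i < M") auto
    then show ?thesis using True qn_nonneg[of p M f] by (intro qn_inf_le[OF True]) auto
  next
    case False
    have "(\<Sum>i<N. \<bar>f i\<bar> powr real_of_ereal p) = (\<Sum>i<M. \<bar>f i\<bar> powr real_of_ereal p)"
      using NM assms(2) by (intro sum.mono_neutral_right) auto
    then show ?thesis by (simp add: qn_fin[OF False])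
  qed
qed

lemma qn_sum:
  assumes "1 \<le> p" "finite J"
  shows "qn p N (\<lambda>i. \<Sum>j\<in>J. g j i) \<le> (\<Sum>j\<in>J. qn p N (g j))"
  using assms(2)
proof (induction J rule: finite_induct)
  case empty then show ?case by (simp add: qn_zero)
next
  case (insert x F)
  have "qn p N (\<lambda>i. \<Sum>j\<in>insert x F. g j i) = qn p N (\<lambda>i. g x i + (\<Sum>j\<in>F. g j i))"
    using insert by simp
  also have "\<dots> \<le> qn p N (g x) + qn p N (\<lambda>i. \<Sum>j\<in>F. g j i)"
    using qn_triangle[OF assms(1)] by (metis (no_types))
  also have "\<dots> \<le> qn p N (g x) + (\<Sum>j\<in>F. qn p N (g j))" using insert by simp
  finally show ?case using insert by simp
qed

lemma qn_diff:
  assumes "1 \<le> p" shows "qn p N (\<lambda>i. f i - g i) \<le> qn p N (\<lambda>i. f i - h i) + qn p N (\<lambda>i. h i - g i)"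
  using qn_triangle[OF assms, of N "\<lambda>i. f i - h i" "\<lambda>i. h i - g i"] by simp

lemma qn_small:
  assumes "1 \<le> p" shows "qn p N h \<le> (\<Sum>i<N. \<bar>h i\<bar>) * qn p N (\<lambda>_. 1)"
proof -
  have "qn p N h \<le> qn p N (\<lambda>i. (\<Sum>i<N. \<bar>h i\<bar>) * 1)"
    by (intro qn_dom[OF assms]) (auto intro: member_le_sum simp: sum_nonneg)
  also have "\<dots> \<le> \<bar>\<Sum>i<N. \<bar>h i\<bar>\<bar> * qn p N (\<lambda>_. 1)" by (rule qn_scale[OF assms])
  finally show ?thesis by (simp add: sum_nonneg)
qed



lemma qn_incseq: "1 \<le> p \<Longrightarrow> incseq (\<lambda>N. qn p N f)"
  by (intro incseq_SucI qn_mono) auto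

lemma qn_lp:
  assumes p: "1 \<le> p" and bdd: "bdd_above (range (\<lambda>N. qn p N f))"
  shows "in_lp p f \<and> lp_norm p f = (SUP N. qn p N f)"
proof -
  obtain B where B: "\<And>N. qn p N f \<le> B" using bdd by (auto simp: bdd_above_def)
  have fi: "\<bar>f i\<bar> \<le> B" for i using qn_ge[OF p, of i "Suc i" f] B[of "Suc i"] by simp
  show ?thesis
  proof (cases "p = \<infinity>")
    case True
    have bd: "bdd_above (range (\<lambda>i. \<bar>f i\<bar>))" using fi by (auto simp: bdd_above_def)
    have "bounded (range f)" unfolding bounded_iff using fi by auto
    moreover have "(SUP i. \<bar>f i\<bar>) = (SUP N. qn p N f)"
    proof (rule antisym)
      show "(SUP i. \<bar>f i\<bar>) \<le> (SUP N. qn p N f)"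
      proof (rule cSUP_least)
        fix i show "\<bar>f i\<bar> \<le> (SUP N. qn p N f)"
          using qn_ge[OF p, of i "Suc i" f] cSUP_upper[OF _ bdd, of "Suc i"] by simp
      qed simp
      show "(SUP N. qn p N f) \<le> (SUP i. \<bar>f i\<bar>)"
      proof (rule cSUP_least)
        fix N
        have "0 \<le> (SUP i. \<bar>f i\<bar>)" using cSUP_upper[OF _ bd, of 0] by (meson UNIV_I abs_ge_zero order_trans)
        moreover have "\<bar>f i\<bar> \<le> (SUP i. \<bar>f i\<bar>)" for i using cSUP_upper[OF _ bd, of i] by simp
        ultimately show "qn p N f \<le> (SUP i. \<bar>f i\<bar>)" by (intro qn_inf_le[OF True]) auto
      qed simp
    qed
    ultimately show ?thesis using True by (simp add: in_lp_def lp_norm_def)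
  next
    case False
    let ?r = "real_of_ereal p"
    have r: "1 \<le> ?r" using rp[OF p False] .
    have S: "(\<Sum>i<N. \<bar>f i\<bar> powr ?r) = qn p N f powr ?r" for N
      using r by (simp add: qn_fin[OF False] powr_powr sum_nonneg)
    have "summable (\<lambda>i. \<bar>f i\<bar> powr ?r)"
    proof (rule bounded_imp_summable)
      fix n
      have "(\<Sum>k\<le>n. \<bar>f k\<bar> powr ?r) = (\<Sum>k<Suc n. \<bar>f k\<bar> powr ?r)" by (simp add: lessThan_Suc_atMost)
      also have "\<dots> = qn p (Suc n) f powr ?r" by (rule S)
      also have "\<dots> \<le> B powr ?r" using B r qn_nonneg by (intro powr_mono2) auto
      finally show "(\<Sum>k\<le>n. \<bar>f k\<bar> powr ?r) \<le> B powr ?r" .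
    qed simp
    moreover have "lp_norm p f = (SUP N. qn p N f)"
    proof -
      have "(\<lambda>N. (\<Sum>i<N. \<bar>f i\<bar> powr ?r) powr (1/?r)) \<longlonglongrightarrow> (\<Sum>i. \<bar>f i\<bar> powr ?r) powr (1/?r)"
        using r by (intro tendsto_powr2 summable_LIMSEQ calculation) (auto intro!: always_eventually sum_nonneg)
      then have "(\<lambda>N. qn p N f) \<longlonglongrightarrow> lp_norm p f" using False
        by (simp add: qn_fin lp_norm_def)
      moreover have "(\<lambda>N. qn p N f) \<longlonglongrightarrow> (SUP N. qn p N f)"
        by (rule LIMSEQ_incseq_SUP[OF bdd qn_incseq[OF p]])
      ultimately show ?thesis using LIMSEQ_unique by blast
    qed
    ultimately show ?thesis using False by (simp add: in_lp_def)
  qed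
qed



lemma qn_le_lp:
  assumes p: "1 \<le> p" and supp: "\<And>i. i \<ge> M \<Longrightarrow> f i = 0"
  shows "qn p N f \<le> lp_norm p f"
proof -
  have "\<forall>N. qn p N f \<le> qn p M f" using qn_supp[OF p] supp by blast
  then have bdd: "bdd_above (range (\<lambda>N. qn p N f))"
    by (auto simp: bdd_above_def)
  show ?thesis using qn_lp[OF p bdd] cSUP_upper[OF _ bdd, of N] by simp
qed

lemma cnn_supp: "i \<ge> width d s n \<Longrightarrow> cnn d s w b x n i = 0"
  by (cases n) (auto simp: zext_def)

lemma cnn_nonneg: "(\<forall>i<d. 0 \<le> x i) \<Longrightarrow> 0 \<le> cnn d s w b x n i"
  by (cases n) (auto simp: zext_def relu_def)

lemma conv_eq:
  assumes "w (Suc n) 0 = 1"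
  shows "conv (width d s n) (s (Suc n)) (w (Suc n)) (cnn d s w b x n) i =
    cnn d s w b x n i + (\<Sum>j\<in>{1..s (Suc n)}. if j \<le> i then w (Suc n) j * cnn d s w b x n (i-j) else 0)"
proof -
  have "conv (width d s n) (s (Suc n)) (w (Suc n)) (cnn d s w b x n) i =
      (\<Sum>j\<le>s (Suc n). if j \<le> i then w (Suc n) j * cnn d s w b x n (i-j) else 0)"
    unfolding conv_def by (intro sum.cong) (auto simp: cnn_supp)
  also have "{..s (Suc n)} = insert 0 {1..s (Suc n)}" by auto
  finally show ?thesis using assms by simp
qed

lemma relu_step: "0 \<le> u \<Longrightarrow> \<bar>relu (u + v) - u\<bar> \<le> \<bar>v\<bar>"
  by (auto simp: relu_def)

theorem theorem6p1:
  fixes p :: ereal and d :: nat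
    and s :: "nat \<Rightarrow> nat"
    and w :: "nat \<Rightarrow> nat \<Rightarrow> real"
    and b :: "nat \<Rightarrow> nat \<Rightarrow> real"
  assumes p: "1 \<le> p"
    and bias: "summable (\<lambda>n. lp_norm p (zext (width d s (Suc n)) (b (Suc n))))"
    and w0: "\<And>n. n \<ge> 1 \<Longrightarrow> w n 0 = 1"
    and wsum: "summable (\<lambda>n. \<Sum>j\<in>{1..s (Suc n)}. \<bar>w (Suc n) j\<bar>)"
  shows "\<forall>x :: nat \<Rightarrow> real. (\<forall>i<d. 0 \<le> x i \<and> x i \<le> 1) \<longrightarrow>
           (\<exists>y. in_lp p y \<and>
              (\<lambda>n. lp_norm p (\<lambda>i. cnn d s w b x n i - y i)) \<longlonglongrightarrow> 0)"
proof (intro allI impI)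
  fix x :: "nat \<Rightarrow> real"
  assume x: "\<forall>i<d. 0 \<le> x i \<and> x i \<le> 1"
  define X where "X = cnn d s w b x"
  define a where "a n = (\<Sum>j\<in>{1..s (Suc n)}. \<bar>w (Suc n) j\<bar>)" for n
  define \<beta> where "\<beta> n = lp_norm p (zext (width d s (Suc n)) (b (Suc n)))" for n
  have Xs: "X n i = 0" if "i \<ge> width d s n" for n i
    using cnn_supp[OF that] X_def by simp
  have X0: "0 \<le> X n i" for n i using cnn_nonneg x X_def by auto
  have step: "\<bar>X (Suc n) i - X n i\<bar> \<le> \<bar>(\<Sum>j\<in>{1..s (Suc n)}. if j \<le> i then w (Suc n) j * X n (i-j) else 0)
       + zext (width d s (Suc n)) (b (Suc n)) i\<bar>" for n i
  proof (cases "i < width d s (Suc n)")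
    case True
    have "X (Suc n) i = relu (X n i + ((\<Sum>j\<in>{1..s (Suc n)}. if j \<le> i then w (Suc n) j * X n (i-j) else 0)
       + zext (width d s (Suc n)) (b (Suc n)) i))"
      using True conv_eq[of w n d s b x i] w0[of "Suc n"] unfolding X_def by (simp add: zext_def add.assoc)
    then show ?thesis using relu_step[OF X0[of n i]] by simp
  next
    case False
    then have "X (Suc n) i = 0" "X n i = 0" using Xs[of "Suc n" i] Xs[of n i] by auto
    then show ?thesis by simp
  qed
  have bq: "qn p N (zext (width d s (Suc n)) (b (Suc n))) \<le> \<beta> n" for n N
    unfolding \<beta>_def by (rule qn_le_lp[OF p, of "width d s (Suc n)"]) (simp add: zext_def)
  have cq: "qn p N (\<lambda>i. \<Sum>j\<in>{1..s (Suc n)}. if j \<le> i then w (Suc n) j * X n (i-j) else 0) \<le> a n * qn p N (X n)" for n N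
  proof -
    have "qn p N (\<lambda>i. \<Sum>j\<in>{1..s (Suc n)}. if j \<le> i then w (Suc n) j * X n (i-j) else 0)
       \<le> (\<Sum>j\<in>{1..s (Suc n)}. qn p N (\<lambda>i. if j \<le> i then w (Suc n) j * X n (i-j) else 0))"
      using qn_sum[OF p, of "{1..s (Suc n)}" N "\<lambda>j i. if j \<le> i then w (Suc n) j * X n (i-j) else 0"] by simp
    also have "\<dots> \<le> (\<Sum>j\<in>{1..s (Suc n)}. \<bar>w (Suc n) j\<bar> * qn p N (X n))"
    proof (rule sum_mono)
      fix j
      have e: "(\<lambda>i. if j \<le> i then w (Suc n) j * X n (i-j) else 0) = (\<lambda>i. w (Suc n) j * (if j \<le> i then X n (i-j) else 0))"
        by auto
      have "qn p N (\<lambda>i. w (Suc n) j * (if j \<le> i then X n (i-j) else 0)) \<le> \<bar>w (Suc n) j\<bar> * qn p N (\<lambda>i. if j \<le> i then X n (i-j) else 0)"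
        by (rule qn_scale[OF p])
      also have "\<dots> \<le> \<bar>w (Suc n) j\<bar> * qn p N (X n)"
        by (intro mult_left_mono qn_shift[OF p]) auto
      finally show "qn p N (\<lambda>i. if j \<le> i then w (Suc n) j * X n (i-j) else 0) \<le> \<bar>w (Suc n) j\<bar> * qn p N (X n)"
        unfolding e .
    qed
    also have "\<dots> = a n * qn p N (X n)" by (simp add: a_def sum_distrib_right)
    finally show ?thesis .
  qed
  have dq: "qn p N (\<lambda>i. X (Suc n) i - X n i) \<le> a n * qn p N (X n) + \<beta> n" for n N
  proof -
    have "qn p N (\<lambda>i. X (Suc n) i - X n i) \<le> qn p N (\<lambda>i. (\<Sum>j\<in>{1..s (Suc n)}. if j \<le> i then w (Suc n) j * X n (i-j) else 0)
       + zext (width d s (Suc n)) (b (Suc n)) i)"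
      by (rule qn_dom[OF p step])
    also have "\<dots> \<le> qn p N (\<lambda>i. \<Sum>j\<in>{1..s (Suc n)}. if j \<le> i then w (Suc n) j * X n (i-j) else 0)
       + qn p N (zext (width d s (Suc n)) (b (Suc n)))"
      by (rule qn_triangle[OF p])
    also have "\<dots> \<le> a n * qn p N (X n) + \<beta> n" using cq bq by (intro add_mono)
    finally show ?thesis .
  qed
  define K0 where "K0 = qn p d (X 0)"
  have K0: "qn p N (X 0) \<le> K0" for N unfolding K0_def
    by (rule qn_supp[OF p]) (use Xs[of 0] in auto)
  have a_nn: "0 \<le> a n" for n by (simp add: a_def sum_nonneg)
  have b_nn: "0 \<le> \<beta> n" for n using bq[of 0 n] qn_nonneg[of p 0] by (meson order_trans)
  have "a = (\<lambda>n. \<Sum>j\<in>{1..s (Suc n)}. \<bar>w (Suc n) j\<bar>)" by (rule ext) (simp add: a_def)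
  then have asum: "summable a" using wsum by simp
  have "\<beta> = (\<lambda>n. lp_norm p (zext (width d s (Suc n)) (b (Suc n))))" by (rule ext) (simp only: \<beta>_def)
  then have bsum: "summable \<beta>" using bias by (simp only:)
  have bound: "qn p N (X n) \<le> (K0 + (\<Sum>k<n. \<beta> k)) * exp (\<Sum>k<n. a k)" for n N
  proof (induction n arbitrary: N)
    case 0 then show ?case using K0 by simp
  next
    case (Suc n)
    define E where "E = K0 + (\<Sum>k<n. \<beta> k)"
    define P where "P = exp (\<Sum>k<n. a k)"
    have P1: "1 \<le> P" unfolding P_def using a_nn by (simp add: sum_nonneg)
    have E0: "0 \<le> E" unfolding E_def using K0[of 0] qn_nonneg[of p 0 "X 0"] b_nn
      by (metis add_nonneg_nonneg order_trans sum_nonneg)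
    have IH: "qn p N (X n) \<le> E * P" using Suc by (simp add: E_def P_def)
    have "qn p N (X (Suc n)) \<le> qn p N (X n) + qn p N (\<lambda>i. X (Suc n) i - X n i)"
      using qn_triangle[OF p, of N "X n" "\<lambda>i. X (Suc n) i - X n i"] by simp
    also have "\<dots> \<le> (1 + a n) * qn p N (X n) + \<beta> n" using dq[of N n] by (simp add: algebra_simps)
    also have "\<dots> \<le> (1 + a n) * (E * P) + \<beta> n" using IH a_nn[of n] by (intro add_mono mult_left_mono) auto
    also have "\<dots> \<le> exp (a n) * (E * P) + \<beta> n"
      using E0 P1 exp_ge_add_one_self[of "a n"] by (intro add_mono mult_right_mono) (auto simp: add.commute)
    also have "\<dots> \<le> exp (a n) * (E * P) + \<beta> n * (exp (a n) * P)"
    proof -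
      have "1 \<le> exp (a n) * P" using P1 a_nn[of n] by (metis one_le_exp_iff mult_mono' mult_1 zero_le_one)
      then show ?thesis using b_nn[of n] by (intro add_left_mono) (metis mult_le_cancel_left1 mult_1_right linorder_not_le less_le_trans not_one_le_zero zero_less_mult_iff order_trans mult_left_mono)
    qed
    also have "\<dots> = (E + \<beta> n) * (P * exp (a n))" by (simp add: algebra_simps)
    also have "\<dots> = (K0 + (\<Sum>k<Suc n. \<beta> k)) * exp (\<Sum>k<Suc n. a k)"
      by (simp add: E_def P_def exp_add add.assoc)
    finally show ?case .
  qed
  define M where "M = (K0 + suminf \<beta>) * exp (suminf a)"
  have MB: "qn p N (X n) \<le> M" for n N
  proof -
    have E0: "0 \<le> K0 + (\<Sum>k<n. \<beta> k)" using K0[of 0] qn_nonneg[of p 0 "X 0"] b_nn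
      by (metis add_nonneg_nonneg order_trans sum_nonneg)
    have "(K0 + (\<Sum>k<n. \<beta> k)) * exp (\<Sum>k<n. a k) \<le> M" unfolding M_def
      using E0 sum_le_suminf[OF bsum, of "{..<n}"] sum_le_suminf[OF asum, of "{..<n}"] a_nn b_nn
      by (intro mult_mono) auto
    then show ?thesis using bound[of N n] by linarith
  qed
  define \<delta> where "\<delta> n = a n * M + \<beta> n" for n
  have M0: "0 \<le> M" using MB[of 0 0] qn_nonneg[of p 0 "X 0"] by linarith
  have d_nn: "0 \<le> \<delta> n" for n using a_nn b_nn M0 by (simp add: \<delta>_def)
  have dsum: "summable \<delta>" unfolding \<delta>_def by (intro summable_add summable_mult2 asum bsum)
  have dqM: "qn p N (\<lambda>i. X (Suc n) i - X n i) \<le> \<delta> n" for n N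
    using dq[of N n] mult_left_mono[OF MB[of N n] a_nn[of n]] by (simp add: \<delta>_def)
  have cauchy: "qn p N (\<lambda>i. X (n + k) i - X n i) \<le> (\<Sum>j<k. \<delta> (j + n))" for n k N
  proof (induction k)
    case 0 then show ?case by (simp add: qn_zero)
  next
    case (Suc k)
    have "qn p N (\<lambda>i. X (n + Suc k) i - X n i) \<le> qn p N (\<lambda>i. X (Suc (n + k)) i - X (n + k) i) + qn p N (\<lambda>i. X (n + k) i - X n i)"
      using qn_diff[OF p, of N "X (n + Suc k)" "X n" "X (n+k)"] by simp
    also have "\<dots> \<le> \<delta> (k + n) + (\<Sum>j<k. \<delta> (j + n))" using dqM[of N "n+k"] Suc by (simp add: add.commute)
    finally show ?case by simp
  qed
  define T where "T n = (\<Sum>j. \<delta> (j + n))" for n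
  have sumT: "(\<Sum>j<k. \<delta> (j + n)) \<le> T n" for k n
    unfolding T_def using d_nn dsum by (intro sum_le_suminf) auto
  have Tlim: "T \<longlonglongrightarrow> 0"
  proof -
    have "(\<lambda>n. suminf \<delta> - (\<Sum>i<n. \<delta> i)) \<longlonglongrightarrow> suminf \<delta> - suminf \<delta>"
      by (intro tendsto_diff tendsto_const summable_LIMSEQ dsum)
    moreover have "T = (\<lambda>n. suminf \<delta> - (\<Sum>i<n. \<delta> i))"
      by (rule ext) (unfold T_def, rule suminf_minus_initial_segment[OF dsum])
    ultimately show ?thesis by simp
  qed
  have CN: "qn p N (\<lambda>i. X m i - X n i) \<le> T n" if "n \<le> m" for n m N
    using cauchy[of N n "m - n"] sumT[where k="m-n" and n=n] that by simp
  have CN': "qn p N (\<lambda>i. X n i - X m i) \<le> T n" if "n \<le> m" for n m N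
  proof -
    have "qn p N (\<lambda>i. X n i - X m i) \<le> qn p N (\<lambda>i. X m i - X n i)"
      by (rule qn_dom[OF p]) (simp add: abs_minus_commute)
    then show ?thesis using CN[OF that, of N] by linarith
  qed
  have pw: "\<bar>X m i - X n i\<bar> \<le> T n" if "n \<le> m" for n m i
    using qn_ge[OF p, of i "Suc i" "\<lambda>i. X m i - X n i"] CN[OF that, of "Suc i"] by simp
  have conv: "convergent (\<lambda>n. X n i)" for i
  proof -
    have "Cauchy (\<lambda>n. X n i)"
    proof (rule CauchyI)
      fix e :: real assume e: "0 < e"
      then obtain M0 where M0: "\<And>n. n \<ge> M0 \<Longrightarrow> \<bar>T n\<bar> < e/2"
        using Tlim by (metis LIMSEQ_D half_gt_zero real_norm_def diff_zero)
      have "norm (X m i - X n i) < e" if "m \<ge> M0" "n \<ge> M0" for m n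
      proof -
        have "\<bar>X m i - X M0 i\<bar> \<le> T M0" "\<bar>X n i - X M0 i\<bar> \<le> T M0" using pw that by auto
        moreover have "\<bar>T M0\<bar> < e/2" using M0 by simp
        ultimately show ?thesis by simp
      qed
      then show "\<exists>M. \<forall>m\<ge>M. \<forall>n\<ge>M. norm (X m i - X n i) < e" by blast
    qed
    then show ?thesis by (simp add: Cauchy_convergent_iff)
  qed
  define y where "y i = lim (\<lambda>n. X n i)" for i
  have Xy: "(\<lambda>n. X n i) \<longlonglongrightarrow> y i" for i
    using conv[of i] by (simp add: y_def convergent_LIMSEQ_iff)
  have qy: "qn p N (\<lambda>i. X n i - y i) \<le> T n" for n N
  proof -
    define c where "c = qn p N (\<lambda>_. 1)"
    have lim: "(\<lambda>m. T n + (\<Sum>i<N. \<bar>X m i - y i\<bar>) * c) \<longlonglongrightarrow> T n + (\<Sum>i<N. \<bar>y i - y i\<bar>) * c"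
      by (intro tendsto_intros Xy)
    have "\<forall>m\<ge>n. qn p N (\<lambda>i. X n i - y i) \<le> T n + (\<Sum>i<N. \<bar>X m i - y i\<bar>) * c"
    proof (intro allI impI)
      fix m assume "n \<le> m"
      have "qn p N (\<lambda>i. X n i - y i) \<le> qn p N (\<lambda>i. X n i - X m i) + qn p N (\<lambda>i. X m i - y i)"
        by (rule qn_diff[OF p])
      also have "\<dots> \<le> T n + (\<Sum>i<N. \<bar>X m i - y i\<bar>) * c"
        using CN'[OF \<open>n \<le> m\<close>, of N] qn_small[OF p, of N "\<lambda>i. X m i - y i"] unfolding c_def
        by (intro add_mono) auto
      finally show "qn p N (\<lambda>i. X n i - y i) \<le> T n + (\<Sum>i<N. \<bar>X m i - y i\<bar>) * c" .
    qed
    then show ?thesis using LIMSEQ_le_const[OF lim] by auto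
  qed
  have bddy: "bdd_above (range (\<lambda>N. qn p N y))"
  proof -
    have "qn p N y \<le> T 0 + M" for N
    proof -
      have "qn p N (\<lambda>i. (y i - X 0 i) + X 0 i) \<le> qn p N (\<lambda>i. y i - X 0 i) + qn p N (X 0)"
        by (rule qn_triangle[OF p])
      moreover have "qn p N (\<lambda>i. y i - X 0 i) \<le> T 0"
      proof -
        have "qn p N (\<lambda>i. y i - X 0 i) \<le> qn p N (\<lambda>i. X 0 i - y i)"
          by (rule qn_dom[OF p]) (simp add: abs_minus_commute)
        then show ?thesis using qy[of N 0] by linarith
      qed
      ultimately show ?thesis using MB[of N 0] by simp
    qed
    then show ?thesis by (auto simp: bdd_above_def)
  qed
  have lpb: "0 \<le> lp_norm p (\<lambda>i. X n i - y i) \<and> lp_norm p (\<lambda>i. X n i - y i) \<le> T n" for n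
  proof -
    have bdd: "bdd_above (range (\<lambda>N. qn p N (\<lambda>i. X n i - y i)))"
      using qy[of _ n] by (auto simp: bdd_above_def)
    have e: "lp_norm p (\<lambda>i. X n i - y i) = (SUP N. qn p N (\<lambda>i. X n i - y i))"
      using qn_lp[OF p bdd] by simp
    have "0 \<le> (SUP N. qn p N (\<lambda>i. X n i - y i))"
      using cSUP_upper[OF _ bdd, of 0] qn_nonneg[of p 0 "\<lambda>i. X n i - y i"] by simp
    moreover have "(SUP N. qn p N (\<lambda>i. X n i - y i)) \<le> T n"
      by (rule cSUP_least) (auto intro: qy)
    ultimately show ?thesis unfolding e by simp
  qed
  have "(\<lambda>n. lp_norm p (\<lambda>i. X n i - y i)) \<longlonglongrightarrow> 0"
    by (rule real_tendsto_sandwich[OF _ _ tendsto_const Tlim]) (use lpb in auto)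
  moreover have "in_lp p y" using qn_lp[OF p bddy] by simp
  ultimately show "\<exists>y. in_lp p y \<and> (\<lambda>n. lp_norm p (\<lambda>i. cnn d s w b x n i - y i)) \<longlonglongrightarrow> 0"
    unfolding X_def by blast
qed

end
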